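(* Let $\nu$ be a vector norm on $\mathbb{R}^n$, let $H=\{x\in\mathbb{R}^n: e^Tx=0\}$ where $e=(1,\ldots,1)^T$, and let $P_1,P_2,\ldots$ be a sequence of $n\times n$ column stochastic matrices. If $\nu^0_H(P_i)\le 1$ for all $i$ and the sequence $\nu^0_H(P_1),\nu^0_H(P_2),\ldots$ has an accumulation point $c$ with $c<1$, then all general products of the sequence are weakly ergodic.
   Context: A column stochastic matrix is a nonnegative matrix each of whose columns sums to $1$; $H$ is invariant under every such matrix. The coefficient of ergodicity is $\nu^0_H(P)=\sup_{0\ne x\in H}\nu(Px)/\nu(x)$. General products: given a permutation $\sigma$ of the positive integers, set $B_i=P_{\sigma(i)}$; for an integer $p\ge0$ and each $r\ge1$, $C_{p,r}$ is a product of $B_{p+1},\ldots,B_{p+r}$, each used exactly once, in some order (chosen arbitrarily and independently for each $r$). All general products are weakly ergodic if for every such choice of $\sigma$, $p$ and orders, $\lim_{r\to\infty}C_{p,r}x=0$ for all $x\in H$. *)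

theory Defs
  imports "HOL-Analysis.Analysis"
begin

definition is_vector_norm :: "(real^'n \<Rightarrow> real) \<Rightarrow> bool" where
  "is_vector_norm \<nu> \<longleftrightarrow>
     (\<forall>x. 0 \<le> \<nu> x) \<and> (\<forall>x. \<nu> x = 0 \<longleftrightarrow> x = 0) \<and>
     (\<forall>c x. \<nu> (c *\<^sub>R x) = \<bar>c\<bar> * \<nu> x) \<and>
     (\<forall>x y. \<nu> (x + y) \<le> \<nu> x + \<nu> y)"

definition Hsp :: "(real^'n) set" where
  "Hsp = {x. (\<Sum>i\<in>UNIV. x $ i) = 0}"

definition column_stochastic :: "real^'n^'n \<Rightarrow> bool" where
  "column_stochastic P \<longleftrightarrow>
     (\<forall>i j. 0 \<le> P $ i $ j) \<and> (\<forall>j. (\<Sum>i\<in>UNIV. P $ i $ j) = 1)"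

definition coeff_erg :: "(real^'n \<Rightarrow> real) \<Rightarrow> real^'n^'n \<Rightarrow> real" where
  "coeff_erg \<nu> P = (SUP x\<in>Hsp - {0}. \<nu> (P *v x) / \<nu> x)"

definition mat_prod_list :: "(real^'n^'n) list \<Rightarrow> real^'n^'n" where
  "mat_prod_list Ms = foldr (\<lambda>A B. A ** B) Ms (mat 1)"

text \<open>General product C_{p,r}: product of B_{p+1},...,B_{p+r} (B_i = P (sigma i))
  taken in the order B_{p + ord r 1}, ..., B_{p + ord r r}, where ord r permutes {1..r}.\<close>
definition general_product ::
  "(nat \<Rightarrow> real^'n^'n) \<Rightarrow> (nat \<Rightarrow> nat) \<Rightarrow> nat \<Rightarrow> (nat \<Rightarrow> nat \<Rightarrow> nat) \<Rightarrow> nat \<Rightarrow> real^'n^'n" where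
  "general_product P \<sigma> p ord r = mat_prod_list (map (\<lambda>k. P (\<sigma> (p + ord r k))) [1..<r+1])"

definition all_general_products_weakly_ergodic :: "(nat \<Rightarrow> real^'n^'n) \<Rightarrow> bool" where
  "all_general_products_weakly_ergodic P \<longleftrightarrow>
     (\<forall>\<sigma> p ord. bij_betw \<sigma> {1..} {1..} \<longrightarrow> (\<forall>r. bij_betw (ord r) {1..r} {1..r}) \<longrightarrow>
        (\<forall>x\<in>Hsp. (\<lambda>r. general_product P \<sigma> p ord r *v x) \<longlonglongrightarrow> 0))"

end

theory Submission
  imports Defs
begin

lemma vn_basic:
  assumes "is_vector_norm \<nu>"
  shows "\<nu> 0 = 0" "\<And>x. 0 \<le> \<nu> x" "\<And>x y. \<nu> (x + y) \<le> \<nu> x + \<nu> y"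
    "\<And>c x. \<nu> (c *\<^sub>R x) = \<bar>c\<bar> * \<nu> x" "\<And>x. \<nu> x = 0 \<longleftrightarrow> x = 0"
  using assms unfolding is_vector_norm_def by auto

lemma vn_diff:
  assumes "is_vector_norm \<nu>"
  shows "\<bar>\<nu> x - \<nu> y\<bar> \<le> \<nu> (x - y)"
proof -
  have a: "\<nu> x \<le> \<nu> (x - y) + \<nu> y" using vn_basic(3)[OF assms, of "x-y" y] by simp
  have "\<nu> (y - x) = \<nu> (x - y)" using vn_basic(4)[OF assms, of "-1" "x-y"] by simp
  moreover have "\<nu> y \<le> \<nu> (y - x) + \<nu> x" using vn_basic(3)[OF assms, of "y-x" x] by simp
  ultimately show ?thesis using a by linarith
qed

lemma vn_sum:
  assumes "is_vector_norm \<nu>" "finite S"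
  shows "\<nu> (sum f S) \<le> (\<Sum>i\<in>S. \<nu> (f i))"
  using assms(2)
proof (induction S rule: finite_induct)
  case empty then show ?case using vn_basic(1)[OF assms(1)] by simp
next
  case (insert a S)
  then show ?case using vn_basic(3)[OF assms(1), of "f a" "sum f S"] by simp
qed

lemma vn_upper:
  fixes \<nu> :: "real^'n \<Rightarrow> real"
  assumes "is_vector_norm \<nu>"
  shows "\<exists>C>0. \<forall>x. \<nu> x \<le> C * norm x"
proof -
  define C where "C = (\<Sum>i\<in>UNIV. \<nu> (axis i 1)) + 1"
  have C0: "C > 0" unfolding C_def using vn_basic(2)[OF assms]
    by (smt (verit) sum_nonneg)
  have "\<nu> x \<le> C * norm x" for x
  proof -
    have "x = (\<Sum>i\<in>UNIV. x $ i *\<^sub>R axis i 1)"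
      using basis_expansion[of x] by (simp add: scalar_mult_eq_scaleR)
    then have "\<nu> x \<le> (\<Sum>i\<in>UNIV. \<nu> (x $ i *\<^sub>R axis i 1))"
      using vn_sum[OF assms, of UNIV "\<lambda>i. x $ i *\<^sub>R axis i 1"] by simp
    also have "\<dots> = (\<Sum>i\<in>UNIV. \<bar>x $ i\<bar> * \<nu> (axis i 1))"
      using vn_basic(4)[OF assms] by simp
    also have "\<dots> \<le> (\<Sum>i\<in>UNIV. norm x * \<nu> (axis i 1))"
      by (intro sum_mono mult_right_mono component_le_norm_cart vn_basic(2)[OF assms])
    also have "\<dots> = norm x * (C - 1)" unfolding C_def by (simp add: sum_distrib_left)
    also have "\<dots> \<le> C * norm x" by (simp add: algebra_simps)
    finally show ?thesis .
  qed
  then show ?thesis using C0 by blast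
qed

lemma vn_lower:
  fixes \<nu> :: "real^'n \<Rightarrow> real"
  assumes "is_vector_norm \<nu>"
  shows "\<exists>c>0. \<forall>x. c * norm x \<le> \<nu> x"
proof -
  obtain C where C: "C > 0" "\<And>x. \<nu> x \<le> C * norm x" using vn_upper[OF assms] by blast
  have cont: "continuous_on (sphere 0 1) \<nu>"
  proof (rule continuous_on_iff[THEN iffD2], intro ballI allI impI)
    fix x e assume "(e::real) > 0"
    show "\<exists>d>0. \<forall>x'\<in>sphere 0 1. dist x' x < d \<longrightarrow> dist (\<nu> x') (\<nu> x) < e"
    proof (intro exI[of _ "e / C"] conjI ballI impI)
      show "e / C > 0" using \<open>e > 0\<close> C by simp
      fix x' assume "x' \<in> sphere 0 1" "dist x' x < e / C"
      then have "C * norm (x' - x) < e" using C by (simp add: dist_norm field_simps)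
      moreover have "\<bar>\<nu> x' - \<nu> x\<bar> \<le> C * norm (x' - x)"
        using vn_diff[OF assms, of x' x] C(2)[of "x' - x"] by linarith
      ultimately show "dist (\<nu> x') (\<nu> x) < e" by (simp add: dist_real_def)
    qed
  qed
  obtain i :: 'n where True by blast
  have ne: "sphere (0::real^'n) 1 \<noteq> {}"
    using norm_axis_1[of i] by (metis mem_sphere_0 empty_iff)
  obtain x0 where x0: "x0 \<in> sphere 0 1" "\<And>y. y \<in> sphere 0 1 \<Longrightarrow> \<nu> x0 \<le> \<nu> y"
    using continuous_attains_inf[OF compact_sphere ne cont] by blast
  have pos: "\<nu> x0 > 0" using x0(1) vn_basic(2,5)[OF assms, of x0]
    by (metis less_eq_real_def mem_sphere_0 norm_zero zero_neq_one)
  have "\<nu> x0 * norm y \<le> \<nu> y" for y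
  proof (cases "y = 0")
    case True then show ?thesis using vn_basic(1)[OF assms] by simp
  next
    case False
    have "\<nu> x0 \<le> \<nu> ((1 / norm y) *\<^sub>R y)" using x0(2) False by simp
    also have "\<dots> = \<nu> y / norm y" using vn_basic(4)[OF assms] by simp
    finally show ?thesis using False by (simp add: field_simps)
  qed
  then show ?thesis using pos by blast
qed

lemma Hsp_mult:
  assumes "column_stochastic P" "x \<in> Hsp"
  shows "P *v x \<in> Hsp"
proof -
  have "(\<Sum>i\<in>UNIV. (P *v x) $ i) = (\<Sum>i\<in>UNIV. \<Sum>j\<in>UNIV. P $ i $ j * x $ j)"
    by (simp add: matrix_vector_mult_def)
  also have "\<dots> = (\<Sum>j\<in>UNIV. \<Sum>i\<in>UNIV. P $ i $ j * x $ j)" by (rule sum.swap)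
  also have "\<dots> = (\<Sum>j\<in>UNIV. (\<Sum>i\<in>UNIV. P $ i $ j) * x $ j)" by (simp add: sum_distrib_right)
  also have "\<dots> = (\<Sum>j\<in>UNIV. x $ j)" using assms(1) by (simp add: column_stochastic_def)
  also have "\<dots> = 0" using assms(2) by (simp add: Hsp_def)
  finally show ?thesis by (simp add: Hsp_def)
qed

lemma coeff_bound:
  fixes \<nu> :: "real^'n \<Rightarrow> real"
  assumes "is_vector_norm \<nu>" "x \<in> Hsp"
  shows "\<nu> (P *v x) \<le> coeff_erg \<nu> P * \<nu> x"
proof (cases "x = 0")
  case True then show ?thesis using vn_basic(1)[OF assms(1)] by simp
next
  case False
  obtain C where C: "C > 0" "\<And>x. \<nu> x \<le> C * norm x" using vn_upper[OF assms(1)] by blast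
  obtain c where c: "c > 0" "\<And>x. c * norm x \<le> \<nu> x" using vn_lower[OF assms(1)] by blast
  have bl: "bounded_linear (\<lambda>x. P *v x)"
    using matrix_vector_mul_linear linear_conv_bounded_linear by blast
  obtain K where K: "K > 0" "\<And>x. norm (P *v x) \<le> norm x * K"
    using bounded_linear.pos_bounded[OF bl] by blast
  have bd: "\<nu> (P *v y) / \<nu> y \<le> C * K / c" if "y \<noteq> 0" for y
  proof -
    have ny: "\<nu> y > 0" using that vn_basic(2,5)[OF assms(1), of y] by linarith
    have "\<nu> (P *v y) \<le> C * (norm y * K)"
      using C(2)[of "P *v y"] K(2)[of y] C(1) by (meson mult_left_mono less_imp_le order_trans)
    also have "\<dots> = (C * K / c) * (c * norm y)" using c(1) by simp
    also have "\<dots> \<le> (C * K / c) * \<nu> y"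
      using c C K by (intro mult_left_mono) auto
    finally show ?thesis using ny by (simp add: divide_le_eq)
  qed
  have "bdd_above ((\<lambda>x. \<nu> (P *v x) / \<nu> x) ` (Hsp - {0}))"
    using bd by (intro bdd_aboveI[of _ "C * K / c"]) auto
  then have "\<nu> (P *v x) / \<nu> x \<le> coeff_erg \<nu> P"
    unfolding coeff_erg_def using assms(2) False by (intro cSUP_upper) auto
  moreover have "\<nu> x > 0" using False vn_basic(2,5)[OF assms(1), of x] by linarith
  ultimately show ?thesis by (simp add: divide_le_eq mult.commute)
qed

lemma prod_bound:
  fixes \<nu> :: "real^'n \<Rightarrow> real"
  assumes "is_vector_norm \<nu>" "0 \<le> q"
    and "\<forall>A\<in>set Ms. column_stochastic A \<and> coeff_erg \<nu> A \<le> 1" "x \<in> Hsp"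
  shows "mat_prod_list Ms *v x \<in> Hsp \<and>
    \<nu> (mat_prod_list Ms *v x) \<le> q ^ length (filter (\<lambda>A. coeff_erg \<nu> A < q) Ms) * \<nu> x"
  using assms(3)
proof (induction Ms)
  case Nil then show ?case by (simp add: mat_prod_list_def assms(4))
next
  case (Cons A Ms)
  define y where "y = mat_prod_list Ms *v x"
  define k where "k = length (filter (\<lambda>A. coeff_erg \<nu> A < q) Ms)"
  have IH: "y \<in> Hsp" "\<nu> y \<le> q ^ k * \<nu> x" using Cons unfolding y_def k_def by auto
  have A: "column_stochastic A" "coeff_erg \<nu> A \<le> 1" using Cons.prems by auto
  have eq: "mat_prod_list (A # Ms) *v x = A *v y"
    by (simp add: mat_prod_list_def y_def matrix_vector_mul_assoc)
  have cb: "\<nu> (A *v y) \<le> coeff_erg \<nu> A * \<nu> y" using coeff_bound[OF assms(1) IH(1)] .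
  have ny: "0 \<le> \<nu> y" using vn_basic(2)[OF assms(1)] .
  show ?case
  proof (cases "coeff_erg \<nu> A < q")
    case True
    have "\<nu> (A *v y) \<le> q * \<nu> y" using cb True ny
      by (meson less_imp_le mult_right_mono order_trans)
    also have "\<dots> \<le> q * (q ^ k * \<nu> x)" using IH(2) assms(2) by (simp add: mult_left_mono)
    finally show ?thesis using True eq Hsp_mult[OF A(1) IH(1)] by (simp add: k_def)
  next
    case False
    have "\<nu> (A *v y) \<le> 1 * \<nu> y" using cb A(2) ny
      by (meson mult_right_mono order_trans)
    then show ?thesis using False eq Hsp_mult[OF A(1) IH(1)] IH(2) by (simp add: k_def)
  qed
qed

theorem corollary4p4:
  fixes \<nu> :: "real^'n \<Rightarrow> real" and P :: "nat \<Rightarrow> real^'n^'n" and c :: real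
  assumes "is_vector_norm \<nu>"
    and "\<And>i. i \<ge> 1 \<Longrightarrow> column_stochastic (P i)"
    and "\<And>i. i \<ge> 1 \<Longrightarrow> coeff_erg \<nu> (P i) \<le> 1"
    and "\<forall>\<epsilon>>0. \<forall>N. \<exists>i>N. \<bar>coeff_erg \<nu> (P i) - c\<bar> < \<epsilon>"
    and "c < 1"
  shows "all_general_products_weakly_ergodic P"
  unfolding all_general_products_weakly_ergodic_def
proof (intro allI impI ballI)
  fix \<sigma> :: "nat \<Rightarrow> nat" and p :: nat and ord :: "nat \<Rightarrow> nat \<Rightarrow> nat" and x :: "real^'n"
  assume sig: "bij_betw \<sigma> {1..} {1..}" and ordb: "\<forall>r. bij_betw (ord r) {1..r} {1..r}"
    and x: "x \<in> Hsp"
  define q where "q = max ((1 + c) / 2) (1/2)"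
  have q: "0 \<le> q" "q < 1" "c < q" using assms(5) unfolding q_def by (auto simp: less_max_iff_disj)
  define I where "I = {i. 1 \<le> i \<and> coeff_erg \<nu> (P i) < q}"
  have Iinf: "infinite I" unfolding infinite_nat_iff_unbounded
  proof
    fix N
    obtain i where "i > max N 0" "\<bar>coeff_erg \<nu> (P i) - c\<bar> < q - c"
      using assms(4) q(3) by (meson diff_gt_0_iff_gt)
    then show "\<exists>n>N. n \<in> I" unfolding I_def by (intro exI[of _ i]) auto
  qed
  define g where "g j = (coeff_erg \<nu> (P (\<sigma> (p + j))) < q)" for j
  define G where "G = {j. 1 \<le> j \<and> g j}"
  define \<sigma>' where "\<sigma>' = the_inv_into {1..} \<sigma>"
  have Isub: "I \<subseteq> {1..}" unfolding I_def by auto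
  have inj': "inj_on \<sigma>' I"
    using inj_on_the_inv_into[OF bij_betw_imp_inj_on[OF sig]] sig Isub
    unfolding \<sigma>'_def bij_betw_def by (metis inj_on_subset)
  have Jinf: "infinite (\<sigma>' ` I)" using Iinf inj' finite_imageD by blast
  have Ginf: "infinite G" unfolding infinite_nat_iff_unbounded
  proof
    fix N
    obtain k where k: "k > N + p" "k \<in> \<sigma>' ` I" using Jinf unfolding infinite_nat_iff_unbounded by blast
    then obtain i where i: "i \<in> I" "k = \<sigma>' i" by blast
    have "i \<in> {1..}" using i Isub by auto
    then have "\<sigma> k = i" using i sig unfolding \<sigma>'_def
      by (auto simp: bij_betw_def f_the_inv_into_f)
    then show "\<exists>n>N. n \<in> G" using k i unfolding G_def g_def I_def
      by (intro exI[of _ "k - p"]) auto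
  qed
  define Ms where "Ms r = map (\<lambda>k. P (\<sigma> (p + ord r k))) [1..<r+1]" for r
  have gp: "general_product P \<sigma> p ord r = mat_prod_list (Ms r)" for r
    unfolding general_product_def Ms_def by simp
  have ordin: "ord r k \<in> {1..r}" if "k \<in> {1..r}" for r k
    using ordb that unfolding bij_betw_def by blast
  have Msok: "\<forall>A\<in>set (Ms r). column_stochastic A \<and> coeff_erg \<nu> A \<le> 1" for r
  proof
    fix A assume "A \<in> set (Ms r)"
    then have "A \<in> (\<lambda>k. P (\<sigma> (p + ord r k))) ` {1..<r+1}" unfolding Ms_def by (simp only: set_map set_upt)
    then obtain k where k: "k \<in> {1..r}" "A = P (\<sigma> (p + ord r k))"
      by (auto simp: atLeastLessThanSuc_atLeastAtMost)
    have "p + ord r k \<in> {1..}" using ordin[OF k(1)] by auto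
    then have "\<sigma> (p + ord r k) \<ge> 1" using sig unfolding bij_betw_def by auto
    then show "column_stochastic A \<and> coeff_erg \<nu> A \<le> 1" using k assms(2,3) by auto
  qed
  have cnt: "length (filter (\<lambda>A. coeff_erg \<nu> A < q) (Ms r)) = card (G \<inter> {1..r})" for r
  proof -
    have "length (filter (\<lambda>A. coeff_erg \<nu> A < q) (Ms r))
        = length (filter (\<lambda>k. g (ord r k)) [1..<r+1])"
      unfolding Ms_def g_def by (simp add: filter_map comp_def)
    also have "\<dots> = card ({k. g (ord r k)} \<inter> {1..r})"
    proof -
      have "set [1..<r+1] = {1..r}" by (simp only: set_upt atLeastLessThanSuc_atLeastAtMost Suc_eq_plus1[symmetric])
      then show ?thesis by (subst distinct_length_filter) simp_all
    qed
    also have "\<dots> = card (ord r ` ({k. g (ord r k)} \<inter> {1..r}))"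
      using ordb unfolding bij_betw_def by (metis card_image inf_le2 inj_on_subset)
    also have "ord r ` ({k. g (ord r k)} \<inter> {1..r}) = G \<inter> {1..r}"
    proof -
      have "ord r ` {1..r} = {1..r}" using ordb unfolding bij_betw_def by auto
      then show ?thesis unfolding G_def by auto
    qed
    finally show ?thesis .
  qed
  have evm: "\<exists>R. \<forall>r\<ge>R. m \<le> card (G \<inter> {1..r})" for m
  proof -
    obtain F where F: "F \<subseteq> G" "finite F" "card F = m" using infinite_arbitrarily_large[OF Ginf] by blast
    obtain R where R: "F \<subseteq> {..<R}" using finite_nat_bounded[OF F(2)] by blast
    have "m \<le> card (G \<inter> {1..r})" if "r \<ge> R" for r
    proof -
      have "F \<subseteq> G \<inter> {1..r}" using F(1) R that unfolding G_def by fastforce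
      then show ?thesis using F(3) card_mono by (metis finite_Int finite_atLeastAtMost)
    qed
    then show ?thesis by blast
  qed
  obtain c0 where c0: "c0 > 0" "\<And>y. c0 * norm y \<le> \<nu> y" using vn_lower[OF assms(1)] by blast
  have nx: "0 \<le> \<nu> x" using vn_basic(2)[OF assms(1)] .
  show "(\<lambda>r. general_product P \<sigma> p ord r *v x) \<longlonglongrightarrow> 0"
  proof (rule LIMSEQ_I)
    fix e :: real assume e: "e > 0"
    have "q < 1" using q by simp
    obtain m where m: "q ^ m < e * c0 / (\<nu> x + 1)"
      using real_arch_pow_inv[of "e * c0 / (\<nu> x + 1)" q] q(2) e c0(1) nx by auto
    obtain R where R: "\<And>r. r \<ge> R \<Longrightarrow> m \<le> card (G \<inter> {1..r})" using evm by blast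
    have "norm (general_product P \<sigma> p ord r *v x - 0) < e" if "r \<ge> R" for r
    proof -
      let ?y = "general_product P \<sigma> p ord r *v x"
      have "\<nu> ?y \<le> q ^ card (G \<inter> {1..r}) * \<nu> x"
        using prod_bound[OF assms(1) q(1) Msok x, of r] gp cnt by simp
      also have "\<dots> \<le> q ^ m * \<nu> x"
        using R[OF that] q nx by (intro mult_right_mono power_decreasing) auto
      also have "\<dots> \<le> (e * c0 / (\<nu> x + 1)) * \<nu> x" using m nx by (intro mult_right_mono) auto
      also have "\<dots> < e * c0"
      proof -
        have "(e * c0 / (\<nu> x + 1)) * \<nu> x = e * c0 * (\<nu> x / (\<nu> x + 1))" by simp
        also have "\<dots> < e * c0 * 1" using e c0(1) nx by (intro mult_strict_left_mono) auto
        finally show ?thesis by simp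
      qed
      finally have "c0 * norm ?y < e * c0" using c0(2)[of ?y] by linarith
      then show ?thesis using c0(1) by (simp add: mult.commute)
    qed
    then show "\<exists>no. \<forall>r\<ge>no. norm (general_product P \<sigma> p ord r *v x - 0) < e" by blast
  qed
qed

end
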